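(* Let $G=(L\cup R,E)$ be a bipartite graph in which every node of $L$ has degree 2, and let $d_{c,\max}$ be the maximum degree of nodes in $R$. Let $k\ge 2$ be an integer and let $\mathcal{S}\subset L$ be such that the induced subgraph $G(\mathcal{S})$ is a tree whose longest path has length $2k-2$. Then \[|\mathcal{S}|\le \sum_{i=0}^{k-2}(d_{c,\max}-1)^{\lfloor (i+1)/2\rfloor}.\]
   Context: For $\mathcal{S}\subset L$, $\Gamma(\mathcal{S})$ is the set of neighbors of $\mathcal{S}$ in $R$, and the induced subgraph $G(\mathcal{S})$ has node set $\mathcal{S}\cup\Gamma(\mathcal{S})$ and all edges of $G$ between $\mathcal{S}$ and $\Gamma(\mathcal{S})$. The length of a path is its number of edges. *)

theory Defs
  imports Main
begin

text \<open>A bipartite graph G = (L \<union> R, E) is given by finite sets L, R and an edge set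
  E \<subseteq> L \<times> R. Vertices of the whole graph live in the sum type 'a + 'b
  (Inl for left nodes, Inr for right nodes).\<close>

definition deg_L :: "('a \<times> 'b) set \<Rightarrow> 'a \<Rightarrow> nat" where
  "deg_L E l = card {r. (l, r) \<in> E}"

definition deg_R :: "('a \<times> 'b) set \<Rightarrow> 'b \<Rightarrow> nat" where
  "deg_R E r = card {l. (l, r) \<in> E}"

definition dc_max :: "'b set \<Rightarrow> ('a \<times> 'b) set \<Rightarrow> nat" where
  "dc_max R E = Max (deg_R E ` R)"

definition nbrs :: "('a \<times> 'b) set \<Rightarrow> 'a set \<Rightarrow> 'b set" where
  "nbrs E S = {r. \<exists>l\<in>S. (l, r) \<in> E}"

definition ind_verts :: "('a \<times> 'b) set \<Rightarrow> 'a set \<Rightarrow> ('a + 'b) set" where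
  "ind_verts E S = Inl ` S \<union> Inr ` nbrs E S"

definition ind_adj :: "('a \<times> 'b) set \<Rightarrow> 'a set \<Rightarrow> ('a + 'b) \<Rightarrow> ('a + 'b) \<Rightarrow> bool" where
  "ind_adj E S u v \<longleftrightarrow> (\<exists>l r. l \<in> S \<and> (l, r) \<in> E \<and>
      ((u = Inl l \<and> v = Inr r) \<or> (u = Inr r \<and> v = Inl l)))"

definition is_path :: "'v set \<Rightarrow> ('v \<Rightarrow> 'v \<Rightarrow> bool) \<Rightarrow> 'v list \<Rightarrow> bool" where
  "is_path V adj p \<longleftrightarrow> p \<noteq> [] \<and> set p \<subseteq> V \<and> distinct p \<and>
     (\<forall>i. Suc i < length p \<longrightarrow> adj (p ! i) (p ! Suc i))"

definition path_len :: "'v list \<Rightarrow> nat" where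
  "path_len p = length p - 1"

definition is_cycle :: "'v set \<Rightarrow> ('v \<Rightarrow> 'v \<Rightarrow> bool) \<Rightarrow> 'v list \<Rightarrow> bool" where
  "is_cycle V adj c \<longleftrightarrow> 3 \<le> length c \<and> is_path V adj c \<and> adj (last c) (hd c)"

definition graph_connected :: "'v set \<Rightarrow> ('v \<Rightarrow> 'v \<Rightarrow> bool) \<Rightarrow> bool" where
  "graph_connected V adj \<longleftrightarrow>
     (\<forall>u\<in>V. \<forall>v\<in>V. \<exists>p. is_path V adj p \<and> hd p = u \<and> last p = v)"

definition is_tree :: "'v set \<Rightarrow> ('v \<Rightarrow> 'v \<Rightarrow> bool) \<Rightarrow> bool" where
  "is_tree V adj \<longleftrightarrow> V \<noteq> {} \<and> graph_connected V adj \<and> \<not> (\<exists>c. is_cycle V adj c)"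

definition longest_path_len :: "'v set \<Rightarrow> ('v \<Rightarrow> 'v \<Rightarrow> bool) \<Rightarrow> nat" where
  "longest_path_len V adj = Max (path_len ` {p. is_path V adj p})"

end

theory Submission imports Defs begin

lemma is_path_iff: "is_path V adj p \<longleftrightarrow> p \<noteq> [] \<and> set p \<subseteq> V \<and> distinct p \<and> successively adj p"
  unfolding is_path_def successively_conv_nth by blast

lemma succ_take: "successively adj xs \<Longrightarrow> successively adj (take n xs)"
  by (metis append_take_drop_id successively_append_iff)
lemma succ_drop: "successively adj xs \<Longrightarrow> successively adj (drop n xs)"
  by (metis append_take_drop_id successively_append_iff)

primrec ball :: "('v \<Rightarrow> 'v \<Rightarrow> bool) \<Rightarrow> 'v \<Rightarrow> nat \<Rightarrow> 'v set" where
  "ball adj c 0 = {c}"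
| "ball adj c (Suc n) = ball adj c n \<union> {v. \<exists>u\<in>ball adj c n. adj u v}"

lemma ball_mono: "n \<le> n' \<Longrightarrow> ball adj c n \<subseteq> ball adj c n'"
  by (induction n' ) (auto simp: le_Suc_eq)

lemma walk_ball: "successively adj p \<Longrightarrow> p \<noteq> [] \<Longrightarrow> last p \<in> ball adj (hd p) (length p - 1)"
proof (induction p rule: rev_induct)
  case Nil then show ?case by simp
next
  case (snoc x xs)
  show ?case
  proof (cases "xs = []")
    case True then show ?thesis by simp
  next
    case False
    have s: "successively adj xs" "adj (last xs) x"
      using snoc.prems False by (auto simp: successively_append_iff)
    have "last xs \<in> ball adj (hd xs) (length xs - 1)" using snoc.IH s False by blast
    then have "x \<in> ball adj (hd xs) (Suc (length xs - 1))" using s by auto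
    moreover have "Suc (length xs - 1) = length (xs @ [x]) - 1" using False by simp
    ultimately show ?thesis using False by simp
  qed
qed

lemma center_aux:
  assumes P: "is_path V adj P" "length P = Suc (2*m)"
    and longest: "\<And>p. is_path V adj p \<Longrightarrow> path_len p \<le> 2*m"
    and q: "is_path V adj q" "hd q = P!m" "last q = v"
    and vnot: "v \<notin> ball adj (P!m) m"
    and j: "j < length q" "q!j = P!i" "i < length P" "m \<le> i"
    and maxj: "\<And>j'. j < j' \<Longrightarrow> j' < length q \<Longrightarrow> q!j' \<notin> set P"
  shows False
proof -
  have Pp: "P \<noteq> []" "set P \<subseteq> V" "distinct P" "successively adj P" using P(1) by (auto simp: is_path_iff)
  have qp: "q \<noteq> []" "set q \<subseteq> V" "distinct q" "successively adj q" using q(1) by (auto simp: is_path_iff)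
  define A where "A = drop m (take (Suc i) P)"
  define B where "B = drop (Suc j) q"
  have Ane: "A \<noteq> []" using j P(2) by (simp add: A_def)
  have hdA: "hd A = P!m" using j by (simp add: A_def hd_drop_conv_nth)
  have lastA: "last A = P!i" using j
    by (simp add: A_def last_drop) (simp add: take_Suc_conv_app_nth)
  have lenA: "length A = Suc i - m" using j by (simp add: A_def)
  have sA: "successively adj A" unfolding A_def by (intro succ_drop succ_take Pp)
  have sB: "successively adj B" unfolding B_def by (intro succ_drop qp)
  have junc: "B \<noteq> [] \<Longrightarrow> adj (P!i) (hd B)"
  proof -
    assume "B \<noteq> []"
    then have "Suc j < length q" by (simp add: B_def)
    then have "adj (q!j) (q!Suc j)" using successively_nth[OF qp(4)] by blast
    then show ?thesis using j \<open>Suc j < length q\<close> by (simp add: B_def hd_drop_conv_nth)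
  qed
  have sW: "successively adj (A @ B)" using sA sB junc lastA by (auto simp: successively_append_iff)
  have lastW: "last (A @ B) = v"
  proof (cases "B = []")
    case True
    then have "j = length q - 1" using j by (simp add: B_def)
    then have "q!j = last q" using qp(1) by (simp add: last_conv_nth)
    then show ?thesis using True lastA j q by simp
  next
    case False then show ?thesis using q by (simp add: B_def)
  qed
  have "v \<in> ball adj (P!m) (length (A @ B) - 1)"
    using walk_ball[OF sW] Ane hdA lastW by simp
  then have gt: "length (A @ B) - 1 > m"
    using vnot ball_mono[of "length (A @ B) - 1" m adj "P!m"] by (metis not_less subsetD)
  define X where "X = take (Suc i) P @ B"
  have setB: "x \<in> set B \<Longrightarrow> x \<notin> set P" for x
  proof -
    assume "x \<in> set B"
    then obtain a where "a < length B" "x = B!a" by (auto simp: in_set_conv_nth)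
    then show ?thesis using maxj[of "Suc j + a"] by (simp add: B_def)
  qed
  have "is_path V adj X"
    unfolding is_path_iff X_def
  proof (intro conjI)
    show "take (Suc i) P @ B \<noteq> []" using Pp by simp
    show "set (take (Suc i) P @ B) \<subseteq> V" using Pp qp set_take_subset[of "Suc i" P]
        set_drop_subset[of "Suc j" q] by (auto simp: B_def)
    show "distinct (take (Suc i) P @ B)" using Pp qp setB in_set_takeD[of _ "Suc i" P]
      by (auto simp: B_def)
    have "last (take (Suc i) P) = P!i" using j by (simp add: take_Suc_conv_app_nth)
    then show "successively adj (take (Suc i) P @ B)"
      using succ_take[OF Pp(4)] sB junc by (auto simp: successively_append_iff)
  qed
  then have "path_len X \<le> 2*m" by (rule longest)
  moreover have "path_len X = Suc i + length B - 1" using j by (simp add: X_def path_len_def)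
  moreover have "length (A @ B) = Suc i - m + length B" using lenA by simp
  ultimately show False using gt j by linarith
qed

lemma center:
  assumes sym: "\<And>u v. adj u v \<Longrightarrow> adj v u"
    and P: "is_path V adj P" "length P = Suc (2*m)"
    and longest: "\<And>p. is_path V adj p \<Longrightarrow> path_len p \<le> 2*m"
    and conn: "graph_connected V adj" and v: "v \<in> V"
  shows "v \<in> ball adj (P!m) m"
proof (rule ccontr)
  assume vnot: "v \<notin> ball adj (P!m) m"
  have Pp: "P \<noteq> []" "set P \<subseteq> V" "distinct P" "successively adj P" using P(1) by (auto simp: is_path_iff)
  have Pm: "P!m \<in> V" using Pp P(2) by (auto simp: subset_iff)
  obtain q where q: "is_path V adj q" "hd q = P!m" "last q = v"
    using conn Pm v unfolding graph_connected_def by blast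
  have qne: "q \<noteq> []" using q by (simp add: is_path_def)
  define J where "J = {j. j < length q \<and> q!j \<in> set P}"
  have "0 \<in> J" using q qne P(2) by (auto simp: J_def hd_conv_nth)
  have fJ: "finite J" by (simp add: J_def)
  define j where "j = Max J"
  have jJ: "j \<in> J" using fJ \<open>0 \<in> J\<close> j_def Max_in by blast
  have maxj: "\<And>j'. j < j' \<Longrightarrow> j' < length q \<Longrightarrow> q!j' \<notin> set P"
    using Max_ge[OF fJ] j_def J_def by fastforce
  obtain i where i: "i < length P" "q!j = P!i" using jJ by (auto simp: J_def in_set_conv_nth)
  show False
  proof (cases "m \<le> i")
    case True
    then show False using center_aux[OF P longest q vnot _ i(2) i(1) True maxj] jJ by (auto simp: J_def)
  next
    case False
    have rP: "is_path V adj (rev P)" using Pp sym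
      by (auto simp: is_path_iff intro: successively_mono)
    have rl: "length (rev P) = Suc (2*m)" using P by simp
    have rm: "rev P ! m = P!m" using P(2) by (simp add: rev_nth)
    have ri: "q!j = rev P ! (2*m - i)" "2*m - i < length (rev P)" "m \<le> 2*m - i"
      using i False P(2) by (auto simp: rev_nth)
    show False using center_aux[OF rP rl longest, of q v j "2*m - i"] q vnot rm ri maxj jJ
      by (auto simp: J_def)
  qed
qed

fun layer :: "('v \<Rightarrow> 'v \<Rightarrow> bool) \<Rightarrow> 'v \<Rightarrow> nat \<Rightarrow> 'v set" where
  "layer adj c 0 = {c}"
| "layer adj c (Suc n) = ball adj c (Suc n) - ball adj c n"

lemma ball_Suc_layer: "ball adj c (Suc n) = ball adj c n \<union> layer adj c (Suc n)"
  by auto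

lemma layer_sub_ball: "layer adj c n \<subseteq> ball adj c n"
  by (cases n) auto

lemma layer_sub:
  "layer adj c (Suc n) \<subseteq> (\<Union>w\<in>layer adj c n. {v. adj w v} - ball adj c n)"
proof
  fix v assume v: "v \<in> layer adj c (Suc n)"
  then obtain u where u: "u \<in> ball adj c n" "adj u v" "v \<notin> ball adj c n" by auto
  have "u \<in> layer adj c n"
  proof (cases n)
    case 0 then show ?thesis using u by simp
  next
    case (Suc n')
    then show ?thesis using u by auto
  qed
  then show "v \<in> (\<Union>w\<in>layer adj c n. {v. adj w v} - ball adj c n)" using u by auto
qed

lemma ball_in_V:
  assumes "c \<in> V" "\<And>u v. adj u v \<Longrightarrow> v \<in> V"
  shows "ball adj c n \<subseteq> V"
  using assms by (induction n) auto

lemma layer_card: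
  assumes "finite V" "c \<in> V" "\<And>u v. adj u v \<Longrightarrow> v \<in> V"
  shows "card (layer adj c (Suc n)) \<le> (\<Sum>w\<in>layer adj c n. card ({v. adj w v} - ball adj c n))"
proof -
  have fl: "finite (layer adj c n)"
    using finite_subset[OF subset_trans[OF layer_sub_ball ball_in_V[OF assms(2,3)]] assms(1)] .
  have fN: "finite ({v. adj w v} - ball adj c n)" for w
  proof -
    have "{v. adj w v} \<subseteq> V" using assms(3) by blast
    then show ?thesis using assms(1) finite_subset by blast
  qed
  have "card (layer adj c (Suc n)) \<le> card (\<Union>w\<in>layer adj c n. {v. adj w v} - ball adj c n)"
    by (rule card_mono[OF _ layer_sub]) (intro finite_UN_I fl fN)
  also have "\<dots> \<le> (\<Sum>w\<in>layer adj c n. card ({v. adj w v} - ball adj c n))"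
    by (rule card_UN_le[OF fl])
  finally show ?thesis .
qed

lemma nbr_minus:
  assumes sym: "\<And>u v. adj u v \<Longrightarrow> adj v u" and fin: "finite {v. adj w v}"
    and w: "w \<in> layer adj c (Suc n)"
  shows "card ({v. adj w v} - ball adj c (Suc n)) \<le> card {v. adj w v} - 1"
proof -
  obtain u where u: "u \<in> ball adj c n" "adj u w" using w by auto
  have "{v. adj w v} - ball adj c (Suc n) \<subseteq> {v. adj w v} - {u}" using u by auto
  then have "card ({v. adj w v} - ball adj c (Suc n)) \<le> card ({v. adj w v} - {u})"
    by (intro card_mono) (use fin in auto)
  also have "\<dots> = card {v. adj w v} - 1" using u sym by (simp add: card_Diff_singleton)
  finally show ?thesis .
qed


locale bip =
  fixes L :: "'a set" and R :: "'b set" and E :: "('a \<times> 'b) set" and S :: "'a set"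
  assumes finL: "finite L" and finR: "finite R" and ELR: "E \<subseteq> L \<times> R"
    and deg2: "\<forall>l\<in>L. deg_L E l = 2" and SL: "S \<subseteq> L"
begin

abbreviation "V \<equiv> ind_verts E S"
abbreviation "adj \<equiv> ind_adj E S"
abbreviation "d \<equiv> dc_max R E"
abbreviation "e \<equiv> dc_max R E - 1"

lemma adj_V: "adj u v \<Longrightarrow> u \<in> V \<and> v \<in> V"
  unfolding ind_adj_def ind_verts_def nbrs_def by auto

lemma adj_sym: "adj u v \<Longrightarrow> adj v u"
  unfolding ind_adj_def by blast

lemma adj_isl: "adj u v \<Longrightarrow> isl u \<noteq> isl v"
  unfolding ind_adj_def by auto

lemma finV: "finite V"
proof -
  have "nbrs E S \<subseteq> R" using ELR unfolding nbrs_def by auto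
  then show ?thesis unfolding ind_verts_def
    using finite_subset[OF SL finL] finite_subset[OF _ finR] by blast
qed

lemma finN: "finite {v. adj w v}"
  using finite_subset[OF _ finV, of "{v. adj w v}"] adj_V by blast

lemma nbr_Inl: "l \<in> S \<Longrightarrow> {v. adj (Inl l) v} = Inr ` {r. (l,r)\<in>E}"
  unfolding ind_adj_def by auto

lemma card_nbr_Inl: "l \<in> S \<Longrightarrow> card {v. adj (Inl l) v} = 2"
  using nbr_Inl deg2 SL by (auto simp: card_image deg_L_def)

lemma card_nbr_Inr: "Inr r \<in> V \<Longrightarrow> card {v. adj (Inr r) v} \<le> d"
proof -
  assume rV: "Inr r \<in> V"
  then have rR: "r \<in> R" using ELR unfolding ind_verts_def nbrs_def by auto
  have fin: "finite {l. (l, r) \<in> E}" using finite_subset[OF _ finL, of "{l. (l, r) \<in> E}"] ELR by auto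
  have "{v. adj (Inr r) v} \<subseteq> Inl ` {l. (l,r)\<in>E}" unfolding ind_adj_def by auto
  then have "card {v. adj (Inr r) v} \<le> card (Inl ` {l. (l,r)\<in>E} :: ('a + 'b) set)"
    by (rule card_mono[OF finite_imageI[OF fin]])
  also have "\<dots> = deg_R E r" by (simp add: card_image deg_R_def)
  also have "\<dots> \<le> d" unfolding dc_max_def using finR rR by simp
  finally show ?thesis .
qed

lemma deg_bound: "w \<in> V \<Longrightarrow> card {v. adj w v} - 1 \<le> (if isl w then 1 else e)"
proof (cases w)
  case (Inl l)
  assume "w \<in> V" then have "l \<in> S" using Inl unfolding ind_verts_def by auto
  then show ?thesis using Inl card_nbr_Inl by simp
next
  case (Inr r)
  assume "w \<in> V" then show ?thesis using Inr card_nbr_Inr by fastforce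
qed

lemma layer_V: "c \<in> V \<Longrightarrow> layer adj c n \<subseteq> V"
proof -
  assume c: "c \<in> V"
  have "ball adj c n \<subseteq> V" by (rule ball_in_V[OF c]) (use adj_V in blast)
  note l = layer_sub_ball[of adj c n]
  show ?thesis using l \<open>ball adj c n \<subseteq> V\<close> by (rule subset_trans)
qed

lemma layer_isl: "c \<in> V \<Longrightarrow> w \<in> layer adj c n \<Longrightarrow> isl w = (isl c = even n)"
proof (induction n arbitrary: w)
  case 0 then show ?case by simp
next
  case (Suc n)
  have "w \<in> (\<Union>w\<in>layer adj c n. {v. adj w v} - ball adj c n)"
    using subsetD[OF layer_sub Suc.prems(2)] .
  then obtain u where u: "u \<in> layer adj c n" "adj u w" by blast
  have "isl u = (isl c = even n)" using Suc.IH[OF Suc.prems(1) u(1)] .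
  moreover have "isl u \<noteq> isl w" using adj_isl[OF u(2)] .
  ultimately show ?case by auto
qed

lemma layer_step:
  assumes c: "c \<in> V"
  shows "card (layer adj c (Suc (Suc n))) \<le> card (layer adj c (Suc n)) * (if isl c = even (Suc n) then 1 else e)"
proof -
  have "card (layer adj c (Suc (Suc n))) \<le> (\<Sum>w\<in>layer adj c (Suc n). card ({v. adj w v} - ball adj c (Suc n)))"
    by (rule layer_card[OF finV c]) (use adj_V in blast)
  also have "\<dots> \<le> (\<Sum>w\<in>layer adj c (Suc n). (if isl c = even (Suc n) then 1 else e))"
  proof (rule sum_mono)
    fix w assume w: "w \<in> layer adj c (Suc n)"
    have "card ({v. adj w v} - ball adj c (Suc n)) \<le> card {v. adj w v} - 1"
      by (rule nbr_minus[OF _ finN w]) (rule adj_sym)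
    also have "\<dots> \<le> (if isl w then 1 else e)" using deg_bound layer_V[OF c] w by blast
    finally show "card ({v. adj w v} - ball adj c (Suc n)) \<le> (if isl c = even (Suc n) then 1 else e)"
      using layer_isl[OF c w] by simp
  qed
  also have "\<dots> = card (layer adj c (Suc n)) * (if isl c = even (Suc n) then 1 else e)" by simp
  finally show ?thesis .
qed

lemma layer_one:
  assumes c: "c \<in> V"
  shows "card (layer adj c (Suc 0)) \<le> (if isl c then 2 else d)"
proof -
  have "card (layer adj c (Suc 0)) \<le> (\<Sum>w\<in>layer adj c 0. card ({v. adj w v} - ball adj c 0))"
    by (rule layer_card[OF finV c]) (use adj_V in blast)
  also have "\<dots> \<le> card {v. adj c v}" using finN by (simp add: card_mono)
  also have "\<dots> \<le> (if isl c then 2 else d)"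
  proof (cases c)
    case (Inl l) then have "l \<in> S" using c unfolding ind_verts_def by auto
    then show ?thesis using Inl card_nbr_Inl by simp
  next
    case (Inr r) then show ?thesis using c card_nbr_Inr by simp
  qed
  finally show ?thesis .
qed

declare ball.simps(2)[simp del] layer.simps(2)[simp del]

lemma layers_L:
  assumes c: "c \<in> V" and ic: "isl c"
  shows "card (layer adj c (Suc (2*s))) \<le> 2*e^s \<and> card (layer adj c (Suc (Suc (2*s)))) \<le> 2*e^(Suc s)"
proof (induction s)
  case 0
  have a: "card (layer adj c (Suc 0)) \<le> 2" using layer_one[OF c] ic by simp
  have "card (layer adj c (Suc (Suc 0))) \<le> card (layer adj c (Suc 0)) * e"
    using layer_step[OF c, of 0] ic by simp
  also have "\<dots> \<le> 2 * e" using a by (rule mult_right_mono) simp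
  finally show ?case using a by simp
next
  case (Suc s)
  have a: "card (layer adj c (Suc (2 * Suc s))) \<le> card (layer adj c (Suc (Suc (2*s)))) * 1"
    using layer_step[OF c, of "Suc (2*s)"] ic by simp
  then have a': "card (layer adj c (Suc (2 * Suc s))) \<le> 2*e^(Suc s)" using Suc.IH by simp
  have "card (layer adj c (Suc (Suc (2 * Suc s)))) \<le> card (layer adj c (Suc (2 * Suc s))) * e"
    using layer_step[OF c, of "2 * Suc s"] ic by simp
  also have "\<dots> \<le> 2*e^(Suc s) * e" using a' by (rule mult_right_mono) simp
  finally show ?case using a' by (simp add: mult.commute mult.left_commute)
qed

lemma layers_R:
  assumes c: "c \<in> V" and ic: "\<not> isl c"
  shows "card (layer adj c (Suc (2*s))) \<le> d*e^s \<and> card (layer adj c (Suc (Suc (2*s)))) \<le> d*e^s"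
proof (induction s)
  case 0
  have a: "card (layer adj c (Suc 0)) \<le> d" using layer_one[OF c] ic by simp
  have "card (layer adj c (Suc (Suc 0))) \<le> card (layer adj c (Suc 0)) * 1"
    using layer_step[OF c, of 0] ic by simp
  then show ?case using a by simp
next
  case (Suc s)
  have "card (layer adj c (Suc (2 * Suc s))) \<le> card (layer adj c (Suc (Suc (2*s)))) * e"
    using layer_step[OF c, of "Suc (2*s)"] ic by simp
  also have "\<dots> \<le> d*e^s * e" using Suc.IH by (intro mult_right_mono) simp_all
  finally have a': "card (layer adj c (Suc (2 * Suc s))) \<le> d*e^(Suc s)" by (simp add: mult_ac)
  have "card (layer adj c (Suc (Suc (2 * Suc s)))) \<le> card (layer adj c (Suc (2 * Suc s))) * 1"
    using layer_step[OF c, of "2 * Suc s"] ic by simp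
  then show ?case using a' by simp
qed

lemma finite_ball: "c \<in> V \<Longrightarrow> finite (ball adj c n)"
proof -
  assume c: "c \<in> V"
  have "ball adj c n \<subseteq> V" by (rule ball_in_V[OF c]) (use adj_V in blast)
  then show ?thesis using finV finite_subset by blast
qed

lemma LB_step:
  assumes c: "c \<in> V"
  shows "card (ball adj c (Suc n) \<inter> {v. isl v}) \<le> card (ball adj c n \<inter> {v. isl v}) +
     (if isl c = even (Suc n) then card (layer adj c (Suc n)) else 0)"
proof -
  have fl: "finite (layer adj c (Suc n))" using finite_subset[OF layer_V[OF c] finV] .
  have "ball adj c (Suc n) \<inter> {v. isl v} = (ball adj c n \<inter> {v. isl v}) \<union> (layer adj c (Suc n) \<inter> {v. isl v})"
    by (simp only: ball_Suc_layer Int_Un_distrib2)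
  then have "card (ball adj c (Suc n) \<inter> {v. isl v}) \<le> card (ball adj c n \<inter> {v. isl v}) + card (layer adj c (Suc n) \<inter> {v. isl v})"
    by (metis card_Un_le)
  moreover have "card (layer adj c (Suc n) \<inter> {v. isl v}) \<le> (if isl c = even (Suc n) then card (layer adj c (Suc n)) else 0)"
  proof (cases "isl c = even (Suc n)")
    case True then show ?thesis using fl by (simp add: card_mono)
  next
    case False
    then have "layer adj c (Suc n) \<inter> {v. isl v} = {}" using layer_isl[OF c] by auto
    then show ?thesis by simp
  qed
  ultimately show ?thesis by linarith
qed

lemma LB_L:
  assumes c: "c \<in> V" and ic: "isl c"
  shows "card (ball adj c (Suc (2*t)) \<inter> {v. isl v}) \<le> 1 + (\<Sum>s<t. 2*e^(Suc s))"
proof (induction t)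
  case 0
  have "card (ball adj c 0 \<inter> {v. isl v}) \<le> 1"
    by (rule order_trans[OF card_mono[of "{c}"]]) auto
  then show ?case using LB_step[OF c, of 0] ic by simp
next
  case (Suc t)
  have "card (ball adj c (Suc (2 * Suc t)) \<inter> {v. isl v}) \<le> card (ball adj c (Suc (Suc (2 * t))) \<inter> {v. isl v})"
    using LB_step[OF c, of "Suc (Suc (2*t))"] ic by simp
  also have "\<dots> \<le> card (ball adj c (Suc (2 * t)) \<inter> {v. isl v}) + card (layer adj c (Suc (Suc (2*t))))"
    using LB_step[OF c, of "Suc (2*t)"] ic by simp
  also have "\<dots> \<le> 1 + (\<Sum>s<t. 2*e^(Suc s)) + 2*e^(Suc t)"
    using Suc.IH layers_L[OF c ic, of t] by linarith
  finally show ?case by simp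
qed

lemma LB_R:
  assumes c: "c \<in> V" and ic: "\<not> isl c"
  shows "card (ball adj c (2*t) \<inter> {v. isl v}) \<le> (\<Sum>s<t. d*e^s)"
proof (induction t)
  case 0
  then show ?case using ic by simp
next
  case (Suc t)
  have "card (ball adj c (2 * Suc t) \<inter> {v. isl v}) \<le> card (ball adj c (Suc (2 * t)) \<inter> {v. isl v})"
    using LB_step[OF c, of "Suc (2*t)"] ic by simp
  also have "\<dots> \<le> card (ball adj c (2 * t) \<inter> {v. isl v}) + card (layer adj c (Suc (2*t)))"
    using LB_step[OF c, of "2*t"] ic by simp
  also have "\<dots> \<le> (\<Sum>s<t. d*e^s) + d*e^t"
    using Suc.IH layers_R[OF c ic, of t] by linarith
  finally show ?case by simp
qed

lemma endpoint_Inr: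
  assumes tree: "\<not> (\<exists>C. is_cycle V adj C)" and P: "is_path V adj P" "length P = Suc (2*m)"
    and m: "m \<ge> 1" and longest: "\<And>p. is_path V adj p \<Longrightarrow> path_len p \<le> 2*m"
  shows "\<not> isl (P!0)"
proof
  assume il: "isl (P!0)"
  have Pp: "P \<noteq> []" "set P \<subseteq> V" "distinct P" "successively adj P" using P(1) by (auto simp: is_path_iff)
  have P0V: "P!0 \<in> V" using Pp P(2) by (auto simp: subset_iff)
  obtain l where l: "P!0 = Inl l" using il by (cases "P!0") auto
  have lS: "l \<in> S" using P0V l unfolding ind_verts_def by auto
  have a01: "adj (P!0) (P!1)" using successively_nth[OF Pp(4), of 0] P(2) m by simp
  have c2: "card {v. adj (P!0) v} = 2" using card_nbr_Inl[OF lS] l by simp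
  obtain x where x: "adj (P!0) x" "x \<noteq> P!1"
  proof -
    have "\<not> {v. adj (P!0) v} \<subseteq> {P!1}"
    proof
      assume "{v. adj (P!0) v} \<subseteq> {P!1}"
      then have "card {v. adj (P!0) v} \<le> card {P!1}" by (intro card_mono) auto
      then show False using c2 by simp
    qed
    then show ?thesis using that by blast
  qed
  show False
  proof (cases "x \<in> set P")
    case False
    have "is_path V adj (x # P)"
      using Pp False adj_V[OF x(1)] adj_sym[OF x(1)]
      by (auto simp: is_path_iff successively_Cons hd_conv_nth)
    then have "path_len (x # P) \<le> 2*m" by (rule longest)
    then show False using P(2) by (simp add: path_len_def)
  next
    case True
    then obtain j where j: "j < length P" "P!j = x" by (auto simp: in_set_conv_nth)
    have j0: "j \<noteq> 0" using j x adj_isl by fastforce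
    have j1: "j \<noteq> 1" using j x by auto
    define C where "C = take (Suc j) P"
    have "is_cycle V adj C" unfolding is_cycle_def
    proof (intro conjI)
      show "3 \<le> length C" using j j0 j1 by (simp add: C_def)
      show "is_path V adj C" using Pp set_take_subset[of "Suc j" P]
        by (auto simp: is_path_iff C_def intro: succ_take)
      have "last C = x" using j by (simp add: C_def take_Suc_conv_app_nth)
      moreover have "hd C = P!0" using Pp by (simp add: C_def hd_conv_nth)
      ultimately show "adj (last C) (hd C)" using adj_sym[OF x(1)] by simp
    qed
    then show False using tree by blast
  qed
qed

lemma parity:
  assumes P: "is_path V adj P" and i0: "\<not> isl (P!0)"
  shows "i < length P \<Longrightarrow> isl (P!i) = odd i"
proof (induction i)
  case 0 then show ?case using i0 by simp
next
  case (Suc i)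
  have "adj (P!i) (P!Suc i)" using successively_nth[of adj P i] P Suc.prems by (simp add: is_path_iff)
  then show ?case using adj_isl Suc by fastforce
qed

end

lemma sumA: "(\<Sum>i=0..2*t. (e::nat)^((i+1) div 2)) = 1 + (\<Sum>s<t. 2*e^(Suc s))"
proof (induction t)
  case 0 then show ?case by simp
next
  case (Suc t)
  have "(\<Sum>i=0..2*Suc t. e^((i+1) div 2)) = (\<Sum>i=0..2*t. e^((i+1) div 2)) + e^(Suc t) + e^(Suc t)"
    by (simp add: sum.atLeast0_atMost_Suc)
  then show ?case using Suc.IH by simp
qed

lemma sumB: "(\<Sum>i=0..Suc (2*t). (e::nat)^((i+1) div 2)) = (\<Sum>s<Suc t. (e+1)*e^s)"
proof (induction t)
  case 0 then show ?case by simp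
next
  case (Suc t)
  have "(\<Sum>i=0..Suc (2*Suc t). e^((i+1) div 2)) = (\<Sum>i=0..Suc (2*t). e^((i+1) div 2)) + e^(Suc t) + e^(Suc (Suc t))"
    by (simp add: sum.atLeast0_atMost_Suc)
  then show ?case using Suc.IH by simp
qed


theorem lemma8:
  fixes L :: "'a set" and R :: "'b set" and E :: "('a \<times> 'b) set"
    and S :: "'a set" and k :: nat
  assumes "finite L" and "finite R" and "E \<subseteq> L \<times> R"
    and "\<forall>l\<in>L. deg_L E l = 2"
    and "k \<ge> 2"
    and "S \<subseteq> L"
    and "is_tree (ind_verts E S) (ind_adj E S)"
    and "longest_path_len (ind_verts E S) (ind_adj E S) = 2 * k - 2"
  shows "card S \<le> (\<Sum>i = 0..k - 2. (dc_max R E - 1) ^ ((i + 1) div 2))"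
proof -
  interpret bip L R E S using assms(1-4,6) by unfold_locales
  have tree: "V \<noteq> {}" "graph_connected V adj" "\<not> (\<exists>C. is_cycle V adj C)"
    using assms(7) unfolding is_tree_def by auto
  define m where "m = k - 1"
  have m1: "m \<ge> 1" and km: "2*k - 2 = 2*m" "k - 2 = m - 1" using assms(5) by (auto simp: m_def)
  let ?PS = "{p. is_path V adj p}"
  have fPS: "finite ?PS"
    by (rule finite_subset[OF _ finite_subset_distinct[OF finV]]) (auto simp: is_path_iff)
  obtain v0 where "v0 \<in> V" using tree by blast
  then have "[v0] \<in> ?PS" by (simp add: is_path_def)
  then have neM: "path_len ` ?PS \<noteq> {}" by blast
  have "Max (path_len ` ?PS) \<in> path_len ` ?PS" using Max_in[OF finite_imageI[OF fPS] neM] .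
  then obtain P where P: "is_path V adj P" "path_len P = 2*m"
    using assms(8) km unfolding longest_path_len_def by auto
  have longest: "\<And>p. is_path V adj p \<Longrightarrow> path_len p \<le> 2*m"
  proof -
    fix p assume "is_path V adj p"
    then have "path_len p \<le> Max (path_len ` ?PS)" using fPS by (intro Max_ge) auto
    then show "path_len p \<le> 2*m" using assms(8) km unfolding longest_path_len_def by simp
  qed
  have lenP: "length P = Suc (2*m)" using P by (cases P) (auto simp: path_len_def is_path_def)
  define c where "c = P!m"
  have cV: "c \<in> V" using P lenP by (auto simp: c_def is_path_iff subset_iff)
  have i0: "\<not> isl (P!0)" using endpoint_Inr[OF tree(3) P(1) lenP m1 longest] .
  have ic: "isl c = odd m" using parity[OF P(1) i0, of m] lenP by (simp add: c_def)
  have VB: "V \<subseteq> ball adj c m"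
    using center[OF adj_sym P(1) lenP longest tree(2)] by (auto simp: c_def)
  have "card S = card (Inl ` S :: ('a + 'b) set)" by (simp add: card_image)
  also have "\<dots> \<le> card (ball adj c m \<inter> {v. isl v})"
    by (rule card_mono) (use finite_ball[OF cV] VB in \<open>auto simp: ind_verts_def\<close>)
  finally have cS: "card S \<le> card (ball adj c m \<inter> {v. isl v})" .
  show ?thesis
  proof (cases "odd m")
    case True
    define t where "t = m div 2"
    have t: "m = Suc (2*t)" using True unfolding t_def by presburger
    have "card S \<le> 1 + (\<Sum>s<t. 2*e^(Suc s))" using cS LB_L[OF cV, of t] ic True t by simp
    also have "\<dots> = (\<Sum>i = 0..k - 2. e ^ ((i + 1) div 2))" using sumA[of e t] km t by simp
    finally show ?thesis .
  next
    case False
    define t where "t = m div 2 - 1"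
    have t: "m = 2*Suc t" using False m1 unfolding t_def by presburger
    have "card S \<le> (\<Sum>s<Suc t. d*e^s)" using cS LB_R[OF cV, of "Suc t"] ic False t by simp
    also have "\<dots> \<le> (\<Sum>s<Suc t. (e+1)*e^s)" by (intro sum_mono mult_right_mono) auto
    also have "\<dots> = (\<Sum>i = 0..k - 2. e ^ ((i + 1) div 2))" using sumB[of e t] km t by simp
    finally show ?thesis .
  qed
qed

end
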